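(* Let $\{\Gamma_n\}_{n\ge0}$ be the Diamond Hierarchical Lattice and for each $n$ let $Z_n(q,y)=\sum_{A\subseteq E_n}q^{k(A)}(y-1)^{|A|}$ be the Potts partition function of $\Gamma_n=(V_n,E_n)$, and $\mathcal{S}_n:=(Z_n(q,y)=0)$ its zero divisor. Then for every $n\ge0$, $$\mathcal{S}_n=(R^n)^*(\mathcal{S}_0),$$ where $\mathcal{S}_0=(q(y+q-1)=0)$ and $R:\mathbb{C}\times\mathbb{P}^1\to\mathbb{C}\times\mathbb{P}^1$ is $$R(q,y)=(q,r_q(y)),\qquad r_q(y)=\left(\frac{y^2+q-1}{2y+q-2}\right)^2.$$
   Context: The Diamond Hierarchical Lattice: $\Gamma_0$ is a single edge with endpoints $a,b$; $\Gamma_1$ is the diamond (vertices $a,b,c,d$, edges $ac,cb,ad,db$); $\Gamma_{n+1}$ is obtained from the diamond by replacing each of its four edges with a copy of $\Gamma_n$, whose marked vertices $a,b$ serve as the endpoints of that edge. $k(A)$ is the number of connected components (including isolated vertices) of $(V_n,A)$; for integer $q\ge2$, $Z_n(q,y)=\sum_\sigma y^{\mathcal{E}(\sigma)}$, summing over maps $\sigma:V_n\to\{1,\dots,q\}$ with $\mathcal{E}(\sigma)$ the number of edges whose endpoints get equal values. The zero divisor of a polynomial counts each irreducible component with its order of vanishing; points $y\in\mathbb{P}^1$ are written in the standard chart $\mathbb{C}\subset\mathbb{P}^1$, and $R^*$ denotes pullback of divisors. *)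

theory Defs
  imports Complex_Main "HOL-Computational_Algebra.Computational_Algebra" "HOL-Computational_Algebra.Field_as_Ring"
begin

text \<open>A graph is a pair (N, es): vertex set {0..<N}, edges given as a list of
  endpoint pairs (edge i is es ! i).  The marked vertices are a = 0 and b = 1.\<close>

definition diamond_src :: "nat \<Rightarrow> nat" where
  "diamond_src i = [0, 2, 0, 3] ! i"
definition diamond_tgt :: "nat \<Rightarrow> nat" where
  "diamond_tgt i = [2, 1, 3, 1] ! i"

text \<open>Embedding of vertex v of the i-th copy of a graph with N vertices into the
  next generation (diamond vertices a=0, b=1, c=2, d=3; copies on edges ac, cb, ad, db).\<close>
definition dhl_emb :: "nat \<Rightarrow> nat \<Rightarrow> nat \<Rightarrow> nat" where
  "dhl_emb N i v = (if v = 0 then diamond_src i else if v = 1 then diamond_tgt i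
                    else 4 + i * (N - 2) + (v - 2))"

fun DHL :: "nat \<Rightarrow> nat \<times> (nat \<times> nat) list" where
  "DHL 0 = (2, [(0, 1)])"
| "DHL (Suc n) = (let (N, es) = DHL n in
     (4 + 4 * (N - 2),
      concat (map (\<lambda>i. map (\<lambda>(u, v). (dhl_emb N i u, dhl_emb N i v)) es) [0..<4])))"

definition nverts :: "nat \<Rightarrow> nat" where "nverts n = fst (DHL n)"
definition edges :: "nat \<Rightarrow> (nat \<times> nat) list" where "edges n = snd (DHL n)"

definition adj :: "(nat \<times> nat) list \<Rightarrow> nat set \<Rightarrow> (nat \<times> nat) set" where
  "adj es A = {(u, v). \<exists>i\<in>A. i < length es \<and> (es ! i = (u, v) \<or> es ! i = (v, u))}"

definition ncomp :: "nat \<Rightarrow> (nat \<times> nat) list \<Rightarrow> nat set \<Rightarrow> nat" where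
  "ncomp N es A = card ({0..<N} // ((adj es A)\<^sup>* \<inter> ({0..<N} \<times> {0..<N})))"

section \<open>Bivariate polynomials: outer variable y, coefficients in C[q]\<close>

definition qv :: "complex poly poly" where "qv = [:[:0, 1:]:]"
definition yv :: "complex poly poly" where "yv = [:0, 1:]"

definition Zpoly :: "nat \<Rightarrow> complex poly poly" where
  "Zpoly n = (\<Sum>A\<in>Pow {0..<length (edges n)}.
      qv ^ ncomp (nverts n) (edges n) A * (yv - 1) ^ card A)"

text \<open>Zero divisor of a nonzero polynomial in C[q,y]: the multiset of its irreducible
  components (normalized prime factors) counted with order of vanishing.
  (A polynomial has no zero components on the line y = \<infinity> of C \<times> P^1.)\<close>
definition zero_divisor :: "complex poly poly \<Rightarrow> complex poly poly multiset" where
  "zero_divisor f = prime_factorization f"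

text \<open>Homogeneous lift of r_q: [Y:W] \<mapsto> [(Y^2+(q-1)W^2)^2 : W^2 (2Y+(q-2)W)^2].\<close>
definition Rlift :: "complex poly poly \<times> complex poly poly \<Rightarrow> complex poly poly \<times> complex poly poly" where
  "Rlift PQ = (let (P, Q) = PQ in
     ((P^2 + (qv - 1) * Q^2)^2, Q^2 * (2 * P + (qv - 2) * Q)^2))"

text \<open>Substitution of a homogeneous pair into the homogenization (in y) of f.\<close>
definition hom_subst :: "complex poly poly \<Rightarrow> complex poly poly \<Rightarrow> complex poly poly \<Rightarrow> complex poly poly" where
  "hom_subst f P Q = (\<Sum>k\<le>degree f. [:coeff f k:] * P ^ k * Q ^ (degree f - k))"

text \<open>Pullback (R^n)^* of the zero divisor of f on C \<times> P^1, computed via the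
  homogeneous lift of R^n: the divisor of F(q, P_n, Q_n).\<close>
definition pullback_div :: "nat \<Rightarrow> complex poly poly \<Rightarrow> complex poly poly multiset" where
  "pullback_div n f = (let (P, Q) = (Rlift ^^ n) (yv, 1) in zero_divisor (hom_subst f P Q))"

definition S0poly :: "complex poly poly" where
  "S0poly = qv * (yv + qv - 1)"

end

theory Submission
  imports Defs
begin


definition Col :: "nat \<Rightarrow> nat \<Rightarrow> (nat \<Rightarrow> nat) set" where
  "Col N m = PiE {0..<N} (\<lambda>_. {0..<m})"

lemma adj_sym: "(u, v) \<in> adj es A \<Longrightarrow> (v, u) \<in> adj es A"
  unfolding adj_def by auto

lemma adj_conv: "(adj es A)\<inverse> = adj es A"
  using adj_sym by auto

lemma equivR: "equiv {0..<N} ((adj es A)\<^sup>* \<inter> ({0..<N} \<times> {0..<N}))"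
proof -
  let ?R = "(adj es A)\<^sup>* \<inter> ({0..<N} \<times> {0..<N})"
  have "sym ?R"
  proof (rule symI)
    fix x y assume "(x, y) \<in> ?R"
    then have "(y, x) \<in> ((adj es A)\<inverse>)\<^sup>*" by (simp add: rtrancl_converse)
    then show "(y, x) \<in> ?R" using \<open>(x, y) \<in> ?R\<close> by (simp add: adj_conv)
  qed
  moreover have "trans ?R" by (rule transI) auto
  moreover have "refl_on {0..<N} ?R" by (rule refl_onI) auto
  ultimately show ?thesis by (simp add: equiv_def)
qed

lemma adj_resp:
  assumes "\<forall>i\<in>A. \<sigma> (fst (es ! i)) = \<sigma> (snd (es ! i))" "(x, y) \<in> (adj es A)\<^sup>*"
  shows "\<sigma> x = \<sigma> y"
  using assms(2)
proof (induct rule: rtrancl_induct)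
  case base then show ?case by simp
next
  case (step y z)
  then show ?case using assms(1) unfolding adj_def by (auto dest!: bspec)
qed

lemma card_const:
  assumes rng: "\<forall>(u, v)\<in>set es. u < N \<and> v < N" and A: "A \<subseteq> {0..<length es}"
  shows "card {\<sigma>\<in>Col N m. \<forall>i\<in>A. \<sigma> (fst (es ! i)) = \<sigma> (snd (es ! i))} = m ^ ncomp N es A"
proof -
  define R where "R = (adj es A)\<^sup>* \<inter> ({0..<N} \<times> {0..<N})"
  define Q where "Q = {0..<N} // R"
  have eqv: "equiv {0..<N} R" unfolding R_def by (rule equivR)
  define S where "S = {\<sigma>\<in>Col N m. \<forall>i\<in>A. \<sigma> (fst (es ! i)) = \<sigma> (snd (es ! i))}"
  have S_resp: "\<sigma> x = \<sigma> y" if "\<sigma> \<in> S" "(x, y) \<in> R" for \<sigma> x y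
    using adj_resp[of A \<sigma> es x y] that unfolding S_def R_def by auto
  have edgeR: "(fst (es ! i), snd (es ! i)) \<in> R" if "i \<in> A" for i
  proof -
    have i: "i < length es" using A that by auto
    then have "es ! i \<in> set es" by simp
    then have "fst (es ! i) < N \<and> snd (es ! i) < N" using rng by auto
    moreover have "(fst (es ! i), snd (es ! i)) \<in> adj es A" using that i unfolding adj_def by auto
    ultimately show ?thesis unfolding R_def by (auto simp: mem_Times_iff)
  qed
  define F where "F g = restrict (\<lambda>w. g (R `` {w})) {0..<N}" for g :: "nat set \<Rightarrow> nat"
  have "bij_betw F (PiE Q (\<lambda>_. {0..<m})) S"
  proof (rule bij_betw_imageI)
    show "inj_on F (PiE Q (\<lambda>_. {0..<m}))"
    proof (rule inj_onI)
      fix g1 g2 assume g: "g1 \<in> PiE Q (\<lambda>_. {0..<m})" "g2 \<in> PiE Q (\<lambda>_. {0..<m})" "F g1 = F g2"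
      show "g1 = g2"
      proof (rule extensionalityI[of _ Q])
        show "g1 \<in> extensional Q" "g2 \<in> extensional Q" using g by (auto simp: PiE_def)
        fix X assume "X \<in> Q"
        then obtain w where w: "w \<in> {0..<N}" "X = R `` {w}" unfolding Q_def by (auto elim: quotientE)
        have "F g1 w = F g2 w" using g by simp
        then show "g1 X = g2 X" using w by (simp add: F_def)
      qed
    qed
    show "F ` PiE Q (\<lambda>_. {0..<m}) = S"
    proof
      show "F ` PiE Q (\<lambda>_. {0..<m}) \<subseteq> S"
      proof
        fix \<sigma> assume "\<sigma> \<in> F ` PiE Q (\<lambda>_. {0..<m})"
        then obtain g where g: "g \<in> PiE Q (\<lambda>_. {0..<m})" "\<sigma> = F g" by auto
        have "\<sigma> \<in> Col N m" unfolding Col_def g(2) F_def using g(1)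
          by (auto simp: Q_def quotientI)
        moreover have "\<sigma> (fst (es ! i)) = \<sigma> (snd (es ! i))" if "i \<in> A" for i
        proof -
          have e: "(fst (es ! i), snd (es ! i)) \<in> R" by (rule edgeR[OF that])
          then have "R `` {fst (es ! i)} = R `` {snd (es ! i)}" using eqv by (simp add: equiv_class_eq)
          then show ?thesis using e unfolding g(2) F_def R_def by auto
        qed
        ultimately show "\<sigma> \<in> S" unfolding S_def by auto
      qed
    next
      show "S \<subseteq> F ` PiE Q (\<lambda>_. {0..<m})"
      proof
        fix \<sigma> assume s: "\<sigma> \<in> S"
        define g where "g = restrict (\<lambda>X. \<sigma> (SOME w. w \<in> X)) Q"
        have sub: "(SOME w. w \<in> X) \<in> X" "X \<subseteq> {0..<N}" if "X \<in> Q" for X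
        proof -
          show "(SOME w. w \<in> X) \<in> X" using in_quotient_imp_non_empty[OF eqv] that unfolding Q_def
            by (simp add: some_in_eq)
          show "X \<subseteq> {0..<N}" using that eqv unfolding Q_def
            by (auto simp: R_def elim!: quotientE)
        qed
        have "g \<in> PiE Q (\<lambda>_. {0..<m})"
          using s sub unfolding g_def S_def Col_def by (auto simp: PiE_def Pi_def) (meson atLeastLessThan_iff subsetD)
        moreover have "F g = \<sigma>"
        proof (rule extensionalityI[of _ "{0..<N}"])
          show "F g \<in> extensional {0..<N}" by (simp add: F_def)
          show "\<sigma> \<in> extensional {0..<N}" using s by (auto simp: S_def Col_def PiE_def)
          fix w assume w: "w \<in> {0..<N}"
          then have cl: "R `` {w} \<in> Q" unfolding Q_def by (rule quotientI)
          have "(SOME w'. w' \<in> R `` {w}) \<in> R `` {w}" using sub(1)[OF cl] .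
          then have "(w, SOME w'. w' \<in> R `` {w}) \<in> R" by simp
          then have "\<sigma> (SOME w'. w' \<in> R `` {w}) = \<sigma> w" using S_resp[OF s] by metis
          then show "F g w = \<sigma> w" using w cl by (simp add: F_def g_def)
        qed
        ultimately show "\<sigma> \<in> F ` PiE Q (\<lambda>_. {0..<m})" by blast
      qed
    qed
  qed
  then have "card S = card (PiE Q (\<lambda>_. {0..<m}))" by (simp add: bij_betw_same_card)
  also have "\<dots> = m ^ card Q"
  proof -
    have "finite Q" unfolding Q_def quotient_def by simp
    then show ?thesis by (simp add: card_PiE)
  qed
  finally show ?thesis unfolding S_def Q_def R_def ncomp_def .
qed


definition fw :: "complex \<Rightarrow> nat \<Rightarrow> nat \<Rightarrow> complex" where
  "fw y a b = (if a = b then y else 1)"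

definition W :: "complex \<Rightarrow> (nat \<times> nat) list \<Rightarrow> (nat \<Rightarrow> nat) \<Rightarrow> complex" where
  "W y es \<sigma> = prod_list (map (\<lambda>(u, v). fw y (\<sigma> u) (\<sigma> v)) es)"

lemma prod_list_nth: "prod_list (map g xs) = (\<Prod>i\<in>{0..<length xs}. g (xs ! i))"
proof (induct xs)
  case Nil then show ?case by simp
next
  case (Cons x xs)
  have "(\<Prod>i\<in>{0..<length (x # xs)}. g ((x # xs) ! i)) = g x * (\<Prod>i\<in>{0..<length xs}. g (xs ! i))"
    by (simp add: prod.atLeast0_lessThan_Suc_shift del: prod.op_ivl_Suc)
  then show ?case using Cons by simp
qed

lemma prod_if_const: "finite X \<Longrightarrow> (\<Prod>i\<in>X. if P i then (c::complex) else 0) = (if \<forall>i\<in>X. P i then c ^ card X else 0)"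
  by (induct X rule: finite_induct) auto

lemma colour_sum_FK:
  assumes rng: "\<forall>(u, v)\<in>set es. u < N \<and> v < N"
  shows "(\<Sum>\<sigma>\<in>Col N m. W y es \<sigma>) = (\<Sum>A\<in>Pow {0..<length es}. of_nat m ^ ncomp N es A * (y - 1) ^ card A)"
proof -
  let ?L = "{0..<length es}"
  let ?P = "\<lambda>\<sigma> i. \<sigma> (fst (es ! i)) = \<sigma> (snd (es ! i))"
  have W_exp: "W y es \<sigma> = (\<Sum>A\<in>Pow ?L. if \<forall>i\<in>A. ?P \<sigma> i then (y - 1) ^ card A else 0)" for \<sigma>
  proof -
    have "W y es \<sigma> = (\<Prod>i\<in>?L. (if ?P \<sigma> i then y - 1 else 0) + 1)"
      unfolding W_def prod_list_nth by (intro prod.cong) (auto simp: fw_def split: prod.splits)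
    also have "\<dots> = (\<Sum>A\<in>Pow ?L. (\<Prod>i\<in>A. if ?P \<sigma> i then y - 1 else 0) * (\<Prod>i\<in>?L - A. 1))"
      by (rule prod_add) simp
    also have "\<dots> = (\<Sum>A\<in>Pow ?L. if \<forall>i\<in>A. ?P \<sigma> i then (y - 1) ^ card A else 0)"
      by (intro sum.cong refl) (simp add: prod_if_const finite_subset)
    finally show ?thesis .
  qed
  have "(\<Sum>\<sigma>\<in>Col N m. W y es \<sigma>) = (\<Sum>A\<in>Pow ?L. \<Sum>\<sigma>\<in>Col N m. if \<forall>i\<in>A. ?P \<sigma> i then (y - 1) ^ card A else 0)"
    unfolding W_exp by (rule sum.swap)
  also have "\<dots> = (\<Sum>A\<in>Pow ?L. of_nat (card {\<sigma>\<in>Col N m. \<forall>i\<in>A. ?P \<sigma> i}) * (y - 1) ^ card A)"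
  proof (intro sum.cong refl)
    fix A assume "A \<in> Pow ?L"
    have fin: "finite (Col N m)" unfolding Col_def by (simp add: finite_PiE)
    show "(\<Sum>\<sigma>\<in>Col N m. if \<forall>i\<in>A. ?P \<sigma> i then (y - 1) ^ card A else 0) =
          of_nat (card {\<sigma>\<in>Col N m. \<forall>i\<in>A. ?P \<sigma> i}) * (y - 1) ^ card A"
      using fin by (simp add: sum.If_cases[OF fin] Int_def)
  qed
  also have "\<dots> = (\<Sum>A\<in>Pow ?L. of_nat m ^ ncomp N es A * (y - 1) ^ card A)"
    by (intro sum.cong refl) (simp add: card_const[OF rng])
  finally show ?thesis .
qed



lemma DHL_Suc: "nverts (Suc n) = 4 + 4 * (nverts n - 2)"
  "edges (Suc n) = concat (map (\<lambda>i. map (\<lambda>(u, v). (dhl_emb (nverts n) i u, dhl_emb (nverts n) i v)) (edges n)) [0..<4])"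
  by (simp_all add: nverts_def edges_def split: prod.splits)

lemma nverts_ge2: "nverts n \<ge> 2"
  by (induct n) (auto simp: DHL_Suc, simp add: nverts_def)

lemma emb_lt: assumes "N \<ge> 2" "i < 4" "v < N" shows "dhl_emb N i v < 4 + 4 * (N - 2)"
proof -
  have "i * (N - 2) + (v - 2) < 4 * (N - 2)" if "v \<ge> 2"
  proof -
    have "i * (N - 2) + (v - 2) < i * (N-2) + (N - 2)" using that assms by simp
    also have "\<dots> \<le> 4 * (N-2)" using assms by (metis add.commute mult_Suc mult_le_mono1 Suc_leI numeral_3_eq_3 eval_nat_numeral(3) less_Suc_eq_le)
    finally show ?thesis .
  qed
  then show ?thesis using assms
    by (auto simp: dhl_emb_def diamond_src_def diamond_tgt_def less_Suc_eq nth_Cons' numeral_eq_Suc)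
qed

lemma edges_in: "(u, v) \<in> set (edges n) \<Longrightarrow> u < nverts n \<and> v < nverts n"
proof (induct n arbitrary: u v)
  case 0 then show ?case by (simp add: nverts_def edges_def)
next
  case (Suc n)
  then show ?case using emb_lt[OF nverts_ge2[of n]]
    by (auto simp: DHL_Suc)
qed


definition sel :: "('a \<times> 'a \<times> 'a \<times> 'a) \<Rightarrow> nat \<Rightarrow> 'a" where
  "sel p k = (if k = 0 then fst p else if k = 1 then fst (snd p) else if k = 2 then fst (snd (snd p)) else snd (snd (snd p)))"

lemma emb_simps:
  "dhl_emb N i 0 = diamond_src i" "dhl_emb N i (Suc 0) = diamond_tgt i" "dhl_emb N i 1 = diamond_tgt i"
  "v \<ge> 2 \<Longrightarrow> dhl_emb N i v = 4 + i * (N - 2) + (v - 2)"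
  by (auto simp: dhl_emb_def)

lemma divmod_emb:
  assumes "r < (M::nat)"
  shows "(4 + i * M + r - 4) div M = i" "(4 + i * M + r - 4) mod M = r"
  using assms by auto

lemma decomp_w:
  assumes "4 \<le> w" "w < 4 + 4 * (M::nat)"
  shows "(w - 4) div M < 4" "w = 4 + ((w - 4) div M) * M + (w - 4) mod M" "(w - 4) mod M < M"
proof -
  have M: "M > 0" using assms by auto
  show "(w - 4) div M < 4" using assms M by (simp add: less_mult_imp_div_less mult.commute)
  show "w = 4 + ((w - 4) div M) * M + (w - 4) mod M" using assms by simp
  show "(w - 4) mod M < M" using M by simp
qed


definition T :: "complex \<Rightarrow> nat \<Rightarrow> nat \<Rightarrow> (nat \<times> nat) list \<Rightarrow> nat \<Rightarrow> nat \<Rightarrow> complex" where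
  "T y m N es s t = (\<Sum>\<sigma>\<in>Col N m. if \<sigma> 0 = s \<and> \<sigma> 1 = t then W y es \<sigma> else 0)"

definition glue :: "nat \<Rightarrow> (nat \<Rightarrow> nat) \<times> (nat \<Rightarrow> nat) \<times> (nat \<Rightarrow> nat) \<times> (nat \<Rightarrow> nat) \<Rightarrow> nat \<Rightarrow> nat" where
  "glue N p = restrict (\<lambda>w. if w < 4 then [fst p 0, fst (snd p) 1, fst p 1, fst (snd (snd p)) 1] ! w
      else sel p ((w - 4) div (N - 2)) ((w - 4) mod (N - 2) + 2)) {0..<4 + 4 * (N - 2)}"

definition split4 :: "nat \<Rightarrow> (nat \<Rightarrow> nat) \<Rightarrow> (nat \<Rightarrow> nat) \<times> (nat \<Rightarrow> nat) \<times> (nat \<Rightarrow> nat) \<times> (nat \<Rightarrow> nat)" where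
  "split4 N \<sigma> = (restrict (\<sigma> \<circ> dhl_emb N 0) {0..<N}, restrict (\<sigma> \<circ> dhl_emb N 1) {0..<N},
                 restrict (\<sigma> \<circ> dhl_emb N 2) {0..<N}, restrict (\<sigma> \<circ> dhl_emb N 3) {0..<N})"

lemma lt4: "(k::nat) < 4 \<Longrightarrow> k = 0 \<or> k = 1 \<or> k = 2 \<or> k = 3" by auto

lemma sel_split4: "k < 4 \<Longrightarrow> sel (split4 N \<sigma>) k = restrict (\<sigma> \<circ> dhl_emb N k) {0..<N}"
  by (drule lt4) (auto simp: sel_def split4_def)

lemma W_restrict: "\<forall>(u, v)\<in>set es. u < N \<and> v < N \<Longrightarrow> W y es (restrict g {0..<N}) = W y es g"
  unfolding W_def by (intro arg_cong[of _ _ prod_list] map_cong) auto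

lemma W_concat: "W y (concat (map (\<lambda>i. map (\<lambda>(u, v). (e i u, e i v)) es) [0..<4])) \<sigma> =
   W y es (\<sigma> \<circ> e 0) * W y es (\<sigma> \<circ> e 1) * W y es (\<sigma> \<circ> e 2) * W y es (\<sigma> \<circ> e 3)"
  by (simp add: W_def upt_rec o_def split_def mult.assoc numeral_eq_Suc)


definition compat4 :: "(nat \<Rightarrow> nat) \<times> (nat \<Rightarrow> nat) \<times> (nat \<Rightarrow> nat) \<times> (nat \<Rightarrow> nat) \<Rightarrow> bool" where
  "compat4 p = (case p of (a, b, c, d) \<Rightarrow> a 0 = c 0 \<and> a 1 = b 0 \<and> b 1 = d 1 \<and> c 1 = d 0)"

lemma glue_ge4: "4 \<le> w \<Longrightarrow> w < 4 + 4 * (N - 2) \<Longrightarrow>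
  glue N p w = sel p ((w - 4) div (N - 2)) ((w - 4) mod (N - 2) + 2)"
  by (simp add: glue_def)

lemma glue_lt4: "w < 4 \<Longrightarrow>
  glue N p w = [fst p 0, fst (snd p) 1, fst p 1, fst (snd (snd p)) 1] ! w"
  by (simp add: glue_def)

lemma glue_split:
  assumes N: "N \<ge> 2" and s: "\<sigma> \<in> Col (4 + 4 * (N - 2)) m"
  shows "glue N (split4 N \<sigma>) = \<sigma>"
proof (rule extensionalityI[of _ "{0..<4 + 4 * (N - 2)}"])
  show "glue N (split4 N \<sigma>) \<in> extensional {0..<4 + 4 * (N - 2)}" by (simp add: glue_def)
  show "\<sigma> \<in> extensional {0..<4 + 4 * (N - 2)}" using s by (simp add: Col_def PiE_def)
  fix w assume w: "w \<in> {0..<4 + 4 * (N - 2)}"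
  show "glue N (split4 N \<sigma>) w = \<sigma> w"
  proof (cases "w < 4")
    case True
    then show ?thesis using N w
      by (auto simp: glue_def split4_def emb_simps diamond_src_def diamond_tgt_def dest!: lt4)
  next
    case False
    define k where "k = (w - 4) div (N - 2)"
    define r where "r = (w - 4) mod (N - 2)"
    have k: "k < 4" and wkr: "w = 4 + k * (N - 2) + r" and r: "r < N - 2"
      using decomp_w[of w "N - 2"] False w unfolding k_def r_def by auto
    have "glue N (split4 N \<sigma>) w = sel (split4 N \<sigma>) k (r + 2)"
      using False w by (simp add: glue_def k_def r_def)
    also have "\<dots> = \<sigma> (dhl_emb N k (r + 2))"
    proof -
      have "r + 2 \<in> {0..<N}" using r by auto
      then show ?thesis using sel_split4[OF k, of N \<sigma>] by simp
    qed
    also have "\<dots> = \<sigma> w" using wkr by (simp add: emb_simps)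
    finally show ?thesis .
  qed
qed

lemma split_in:
  assumes N: "N \<ge> 2" and s: "\<sigma> \<in> Col (4 + 4 * (N - 2)) m"
  shows "split4 N \<sigma> \<in> Col N m \<times> Col N m \<times> Col N m \<times> Col N m" "compat4 (split4 N \<sigma>)"
proof -
  have "restrict (\<sigma> \<circ> dhl_emb N k) {0..<N} \<in> Col N m" if "k < 4" for k
    using s emb_lt[OF N that] unfolding Col_def by (auto simp: PiE_def Pi_def)
  then show "split4 N \<sigma> \<in> Col N m \<times> Col N m \<times> Col N m \<times> Col N m" by (simp add: split4_def)
  show "compat4 (split4 N \<sigma>)" using N
    by (simp add: compat4_def split4_def emb_simps diamond_src_def diamond_tgt_def)
qed

lemma split_glue:
  assumes N: "N \<ge> 2" and p: "p \<in> Col N m \<times> Col N m \<times> Col N m \<times> Col N m" "compat4 p"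
  shows "split4 N (glue N p) = p"
proof -
  have selX: "sel p k \<in> Col N m" if "k < 4" for k
    using p(1) lt4[OF that] by (auto simp: sel_def)
  have key: "restrict (glue N p \<circ> dhl_emb N k) {0..<N} = sel p k" if k: "k < 4" for k
  proof (rule extensionalityI[of _ "{0..<N}"])
    show "restrict (glue N p \<circ> dhl_emb N k) {0..<N} \<in> extensional {0..<N}" by simp
    show "sel p k \<in> extensional {0..<N}" using selX[OF k] by (simp add: Col_def PiE_def)
    fix v assume v: "v \<in> {0..<N}"
    have lt: "dhl_emb N k v < 4 + 4 * (N - 2)" using emb_lt[OF N k] v by simp
    show "restrict (glue N p \<circ> dhl_emb N k) {0..<N} v = sel p k v"
    proof (cases "v \<ge> 2")
      case True
      define w where "w = dhl_emb N k v"
      have e: "w = 4 + k * (N - 2) + (v - 2)" using True unfolding w_def by (simp add: emb_simps)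
      have "v - 2 < N - 2" using v True by auto
      then have d1: "(w - 4) div (N - 2) = k" and d2: "(w - 4) mod (N - 2) = v - 2"
        unfolding e by (rule divmod_emb)+
      have vv: "v - 2 + 2 = v" using True by simp
      have ge: "4 \<le> w" using e by simp
      have "glue N p w = sel p ((w - 4) div (N - 2)) ((w - 4) mod (N - 2) + 2)"
        using glue_ge4[OF ge lt[folded w_def], of p] .
      also have "\<dots> = sel p k v" unfolding d1 d2 vv ..
      finally have "glue N p (dhl_emb N k v) = sel p k v" unfolding w_def .
      then show ?thesis using v by simp
    next
      case False
      then have "v = 0 \<or> v = 1" by auto
      obtain a b c d where pe: "p = (a, b, c, d)" by (cases p)
      have cp: "a 0 = c 0" "a 1 = b 0" "b 1 = d 1" "c 1 = d 0" using p(2) by (auto simp: pe compat4_def)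
      have g: "glue N (a, b, c, d) 0 = a 0" "glue N (a, b, c, d) 1 = b 1" "glue N (a, b, c, d) 2 = a 1" "glue N (a, b, c, d) 3 = c 1"
        by (simp_all add: glue_lt4)
      have "glue N p (dhl_emb N k v) = sel p k v"
        using lt4[OF k] \<open>v = 0 \<or> v = 1\<close>
        by (elim disjE) (simp_all add: g cp pe sel_def emb_simps diamond_src_def diamond_tgt_def del: One_nat_def)
      then show ?thesis using v by simp
    qed
  qed
  have "p = (sel p 0, sel p 1, sel p 2, sel p 3)" by (cases p) (simp add: sel_def)
  then show ?thesis using key by (simp add: split4_def)
qed

lemma glue_in:
  assumes N: "N \<ge> 2" and p: "p \<in> Col N m \<times> Col N m \<times> Col N m \<times> Col N m"
  shows "glue N p \<in> Col (4 + 4 * (N - 2)) m"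
proof -
  have selX: "sel p k \<in> Col N m" if "k < 4" for k
    using p(1) lt4[OF that] by (auto simp: sel_def)
  have "glue N p w < m" if w: "w < 4 + 4 * (N - 2)" for w
  proof (cases "w < 4")
    case True
    then show ?thesis using p N w by (cases p) (auto simp: glue_def Col_def PiE_def Pi_def dest!: lt4)
  next
    case False
    define k where "k = (w - 4) div (N - 2)"
    define r where "r = (w - 4) mod (N - 2)"
    have k: "k < 4" and r: "r < N - 2"
      using decomp_w[of w "N - 2"] False w unfolding k_def r_def by auto
    have "glue N p w = sel p k (r + 2)" using False w by (simp add: glue_def k_def r_def)
    then show ?thesis using selX[OF k] r by (auto simp: Col_def PiE_def Pi_def)
  qed
  then show ?thesis by (auto simp: Col_def glue_def)
qed



lemma finCol: "finite (Col N m)" unfolding Col_def by (simp add: finite_PiE)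

lemma Col_lt: "\<sigma> \<in> Col N m \<Longrightarrow> x < N \<Longrightarrow> \<sigma> x < m"
  unfolding Col_def by (auto simp: PiE_def Pi_def)

lemma T_step1:
  assumes N: "N \<ge> 2" and rng: "\<forall>(u, v)\<in>set es. u < N \<and> v < N"
  shows "T y m (4 + 4 * (N - 2)) (concat (map (\<lambda>i. map (\<lambda>(u, v). (dhl_emb N i u, dhl_emb N i v)) es) [0..<4])) s t
    = (\<Sum>p\<in>{p \<in> Col N m \<times> Col N m \<times> Col N m \<times> Col N m. compat4 p}.
         (case p of (a, b, c, d) \<Rightarrow> if a 0 = s \<and> b 1 = t then W y es a * W y es b * W y es c * W y es d else 0))"
  unfolding T_def
proof (rule sum.reindex_bij_witness[where i = "glue N" and j = "split4 N"])
  fix \<sigma> assume s: "\<sigma> \<in> Col (4 + 4 * (N - 2)) m"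
  show "glue N (split4 N \<sigma>) = \<sigma>" by (rule glue_split[OF N s])
  show "split4 N \<sigma> \<in> {p \<in> Col N m \<times> Col N m \<times> Col N m \<times> Col N m. compat4 p}"
    using split_in[OF N s] by simp
  have z: "0 \<in> {0..<N}" "1 \<in> {0..<N}" using N by auto
  show "(case split4 N \<sigma> of (a, b, c, d) \<Rightarrow> if a 0 = s \<and> b 1 = t then W y es a * W y es b * W y es c * W y es d else 0)
     = (if \<sigma> 0 = s \<and> \<sigma> 1 = t then W y (concat (map (\<lambda>i. map (\<lambda>(u, v). (dhl_emb N i u, dhl_emb N i v)) es) [0..<4])) \<sigma> else 0)"
    using z by (simp add: split4_def W_restrict[OF rng] W_concat emb_simps diamond_src_def diamond_tgt_def)
next
  fix p assume p: "p \<in> {p \<in> Col N m \<times> Col N m \<times> Col N m \<times> Col N m. compat4 p}"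
  show "split4 N (glue N p) = p" using split_glue[OF N, of p m] p by blast
  show "glue N p \<in> Col (4 + 4 * (N - 2)) m" using glue_in[OF N, of p m] p by blast
qed


lemma K_eq:
  assumes N: "N \<ge> 2"
  shows "(\<Sum>c\<in>{0..<m}. T y m N es s c * T y m N es c t) =
    (\<Sum>a\<in>Col N m. \<Sum>b\<in>Col N m. if a 0 = s \<and> b 1 = t \<and> a 1 = b 0 then W y es a * W y es b else 0)"
proof -
  have "(\<Sum>c\<in>{0..<m}. T y m N es s c * T y m N es c t) =
     (\<Sum>c\<in>{0..<m}. \<Sum>a\<in>Col N m. \<Sum>b\<in>Col N m. (if a 0 = s \<and> a 1 = c then W y es a else 0) * (if b 0 = c \<and> b 1 = t then W y es b else 0))"
    unfolding T_def by (simp add: sum_product)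
  also have "\<dots> = (\<Sum>a\<in>Col N m. \<Sum>b\<in>Col N m. \<Sum>c\<in>{0..<m}. (if a 0 = s \<and> a 1 = c then W y es a else 0) * (if b 0 = c \<and> b 1 = t then W y es b else 0))"
    by (subst sum.swap) (simp add: sum.swap[of _ "{0..<m}"])
  also have "\<dots> = (\<Sum>a\<in>Col N m. \<Sum>b\<in>Col N m. if a 0 = s \<and> b 1 = t \<and> a 1 = b 0 then W y es a * W y es b else 0)"
  proof (intro sum.cong refl)
    fix a b assume a: "a \<in> Col N m"
    have am: "a 1 \<in> {0..<m}" using Col_lt[OF a] N by simp
    have "(\<Sum>c\<in>{0..<m}. (if a 0 = s \<and> a 1 = c then W y es a else 0) * (if b 0 = c \<and> b 1 = t then W y es b else 0))
       = (\<Sum>c\<in>{0..<m}. if a 1 = c then (if a 0 = s \<and> b 0 = c \<and> b 1 = t then W y es a * W y es b else 0) else 0)"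
      by (intro sum.cong refl) auto
    also have "\<dots> = (if a 0 = s \<and> b 1 = t \<and> a 1 = b 0 then W y es a * W y es b else 0)"
      using am by (subst sum.delta') auto
    finally show "(\<Sum>c\<in>{0..<m}. (if a 0 = s \<and> a 1 = c then W y es a else 0) * (if b 0 = c \<and> b 1 = t then W y es b else 0))
       = (if a 0 = s \<and> b 1 = t \<and> a 1 = b 0 then W y es a * W y es b else 0)" .
  qed
  finally show ?thesis .
qed

lemma T_step:
  assumes N: "N \<ge> 2" and rng: "\<forall>(u, v)\<in>set es. u < N \<and> v < N"
  shows "T y m (4 + 4 * (N - 2)) (concat (map (\<lambda>i. map (\<lambda>(u, v). (dhl_emb N i u, dhl_emb N i v)) es) [0..<4])) s t
    = (\<Sum>c\<in>{0..<m}. T y m N es s c * T y m N es c t) ^ 2"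
proof -
  let ?X = "Col N m"
  define F where "F a b = (if a 0 = s \<and> b 1 = t \<and> a 1 = b 0 then W y es a * W y es b else 0)" for a b
  define h where "h = (\<lambda>p. case p of (a, b, c, d) \<Rightarrow> if a 0 = s \<and> b 1 = t then W y es a * W y es b * W y es c * W y es d else (0::complex))"
  have fin: "finite (?X \<times> ?X \<times> ?X \<times> ?X)" by (simp add: finCol)
  have "T y m (4 + 4 * (N - 2)) (concat (map (\<lambda>i. map (\<lambda>(u, v). (dhl_emb N i u, dhl_emb N i v)) es) [0..<4])) s t
     = (\<Sum>p\<in>{p \<in> ?X \<times> ?X \<times> ?X \<times> ?X. compat4 p}. h p)"
    unfolding h_def by (rule T_step1[OF N rng])
  also have "\<dots> = (\<Sum>p\<in>?X \<times> ?X \<times> ?X \<times> ?X. if compat4 p then h p else 0)"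
    by (rule sum.inter_filter[OF fin])
  also have "\<dots> = (\<Sum>a\<in>?X. \<Sum>b\<in>?X. \<Sum>c\<in>?X. \<Sum>d\<in>?X. if compat4 (a, b, c, d) then h (a, b, c, d) else 0)"
    by (simp only: sum.cartesian_product')
  also have "\<dots> = (\<Sum>a\<in>?X. \<Sum>b\<in>?X. \<Sum>c\<in>?X. \<Sum>d\<in>?X. F a b * F c d)"
    by (intro sum.cong refl) (auto simp: compat4_def F_def h_def)
  also have "\<dots> = (\<Sum>a\<in>?X. \<Sum>b\<in>?X. F a b) * (\<Sum>c\<in>?X. \<Sum>d\<in>?X. F c d)"
    unfolding sum_distrib_right by (simp only: sum_distrib_left)
  also have "\<dots> = (\<Sum>c\<in>{0..<m}. T y m N es s c * T y m N es c t) ^ 2"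
    unfolding K_eq[OF N] F_def power2_eq_square by simp
  finally show ?thesis .
qed



lemma S0_explicit: "S0poly = [:[:0, -1, 1:], [:0, 1:]:]"
proof -
  have a: "(1::complex poly poly) = [:[:1:]:]" by (simp add: one_pCons)
  have b: "(1::complex poly) = [:1:]" by (simp add: one_pCons)
  show ?thesis
    unfolding S0poly_def qv_def yv_def a by (simp add: b)
qed

lemma poly_test: "poly (poly qv [:y:]) z = z" "poly (poly yv [:y:]) z = y"
  by (simp_all add: qv_def yv_def)

lemma poly_test2: "poly (poly (2::complex poly poly) [:y:]) z = 2"
  by simp


fun uv :: "complex \<Rightarrow> nat \<Rightarrow> nat \<Rightarrow> complex \<times> complex" where
  "uv y m 0 = (y, 1)"
| "uv y m (Suc n) = (let a = fst (uv y m n); b = snd (uv y m n) in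
     ((a^2 + (of_nat m - 1) * b^2)^2, b^2 * (2 * a + (of_nat m - 2) * b)^2))"

lemma T_base:
  assumes "s < m" "t < m"
  shows "T y m 2 [(0, 1)] s t = fw y s t"
proof -
  define \<tau> where "\<tau> = restrict (\<lambda>i. if i = 0 then s else t) {0..<2::nat}"
  have iff: "(\<sigma> 0 = s \<and> \<sigma> 1 = t) = (\<sigma> = \<tau>)" if "\<sigma> \<in> Col 2 m" for \<sigma>
  proof
    assume h: "\<sigma> 0 = s \<and> \<sigma> 1 = t"
    show "\<sigma> = \<tau>"
    proof (rule extensionalityI[of _ "{0..<2}"])
      show "\<sigma> \<in> extensional {0..<2}" using that by (simp add: Col_def PiE_def)
      show "\<tau> \<in> extensional {0..<2}" by (simp add: \<tau>_def)
      fix x :: nat assume "x \<in> {0..<2}"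
      then have "x = 0 \<or> x = 1" by auto
      then show "\<sigma> x = \<tau> x" using h by (auto simp: \<tau>_def)
    qed
  qed (simp add: \<tau>_def)
  have tin: "\<tau> \<in> Col 2 m" using assms by (auto simp: \<tau>_def Col_def)
  have "T y m 2 [(0, 1)] s t = (\<Sum>\<sigma>\<in>Col 2 m. if \<sigma> = \<tau> then W y [(0, 1)] \<sigma> else 0)"
    unfolding T_def
  proof (intro sum.cong refl)
    fix \<sigma> assume h: "\<sigma> \<in> Col 2 m"
    show "(if \<sigma> 0 = s \<and> \<sigma> 1 = t then W y [(0, 1)] \<sigma> else 0) = (if \<sigma> = \<tau> then W y [(0, 1)] \<sigma> else 0)"
      by (subst iff[OF h]) (rule refl)
  qed
  also have "\<dots> = W y [(0, 1)] \<tau>" using tin finCol by simp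
  also have "\<dots> = fw y s t" by (simp add: W_def \<tau>_def)
  finally show ?thesis .
qed

lemma sum_uv:
  fixes u v :: complex
  assumes "s < m" "t < m"
  shows "(\<Sum>c\<in>{0..<m}. (if s = c then u else v) * (if c = t then u else v)) =
    (if s = t then u^2 + (of_nat m - 1) * v^2 else 2 * u * v + (of_nat m - 2) * v^2)"
proof -
  have "(\<Sum>c\<in>{0..<m}. (if s = c then u else v) * (if c = t then u else v)) =
    (\<Sum>c\<in>{0..<m}. v * v + (if s = c then (u - v) * v else 0) + (if t = c then v * (u - v) else 0)
        + (if s = c then (if s = t then (u - v)^2 else 0) else 0))"
    apply (intro sum.cong refl)
    apply (auto simp: power2_eq_square)
    apply (simp_all add: algebra_simps)
    done
  also have "\<dots> = of_nat m * (v * v) + (u - v) * v + v * (u - v) + (if s = t then (u - v)^2 else 0)"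
    using assms by (simp add: sum.distrib)
  also have "\<dots> = (if s = t then u^2 + (of_nat m - 1) * v^2 else 2 * u * v + (of_nat m - 2) * v^2)"
    apply (auto simp: power2_eq_square)
    apply (simp_all add: algebra_simps)
    done
  finally show ?thesis .
qed

lemma T_DHL:
  assumes m: "m \<ge> 2" and st: "s < m" "t < m"
  shows "T y m (nverts n) (edges n) s t = (if s = t then fst (uv y m n) else snd (uv y m n))"
  using st
proof (induct n arbitrary: s t)
  case 0
  have "nverts 0 = 2" "edges 0 = [(0, 1)]" by (simp_all add: nverts_def edges_def)
  then show ?case using T_base[OF 0] by (simp add: fw_def)
next
  case (Suc n)
  have rng: "\<forall>(u, v)\<in>set (edges n). u < nverts n \<and> v < nverts n" using edges_in by blast
  have "T y m (nverts (Suc n)) (edges (Suc n)) s t =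
      (\<Sum>c\<in>{0..<m}. T y m (nverts n) (edges n) s c * T y m (nverts n) (edges n) c t) ^ 2"
    unfolding DHL_Suc by (rule T_step[OF nverts_ge2 rng])
  also have "\<dots> = (\<Sum>c\<in>{0..<m}. (if s = c then fst (uv y m n) else snd (uv y m n)) *
                      (if c = t then fst (uv y m n) else snd (uv y m n))) ^ 2"
    using Suc by (intro arg_cong[where f = "\<lambda>x. x ^ 2"] sum.cong refl) simp
  also have "\<dots> = (if s = t then fst (uv y m (Suc n)) else snd (uv y m (Suc n)))"
  proof -
    have e: "(2 * a * b + c * b^2)^2 = b^2 * (2 * a + c * b)^2" for a b c :: complex
      by (simp add: power2_eq_square algebra_simps)
    show ?thesis unfolding sum_uv[OF Suc.prems] by (simp add: Let_def e)
  qed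
  finally show ?case .
qed

lemma Z_colour:
  assumes m: "m \<ge> 2"
  shows "(\<Sum>\<sigma>\<in>Col (nverts n) m. W y (edges n) \<sigma>) = of_nat m * (fst (uv y m n) + (of_nat m - 1) * snd (uv y m n))"
proof -
  let ?N = "nverts n"
  have "(\<Sum>\<sigma>\<in>Col ?N m. W y (edges n) \<sigma>) = (\<Sum>\<sigma>\<in>Col ?N m. \<Sum>s\<in>{0..<m}. \<Sum>t\<in>{0..<m}.
          if \<sigma> 0 = s then (if \<sigma> 1 = t then W y (edges n) \<sigma> else 0) else 0)"
  proof (intro sum.cong refl)
    fix \<sigma> assume s: "\<sigma> \<in> Col ?N m"
    have i: "\<sigma> 0 \<in> {0..<m}" "\<sigma> 1 \<in> {0..<m}" using Col_lt[OF s] nverts_ge2[of n] by auto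
    have "(\<Sum>s\<in>{0..<m}. \<Sum>t\<in>{0..<m}.
          if \<sigma> 0 = s then (if \<sigma> 1 = t then W y (edges n) \<sigma> else 0) else 0)
        = (\<Sum>s\<in>{0..<m}. if \<sigma> 0 = s then (\<Sum>t\<in>{0..<m}. if \<sigma> 1 = t then W y (edges n) \<sigma> else 0) else 0)"
      by (intro sum.cong refl) simp
    also have "\<dots> = W y (edges n) \<sigma>" using i by (simp only: sum.delta' finite_atLeastLessThan if_True)
    finally show "W y (edges n) \<sigma> = (\<Sum>s\<in>{0..<m}. \<Sum>t\<in>{0..<m}.
          if \<sigma> 0 = s then (if \<sigma> 1 = t then W y (edges n) \<sigma> else 0) else 0)" by simp
  qed
  also have "\<dots> = (\<Sum>s\<in>{0..<m}. \<Sum>t\<in>{0..<m}. T y m ?N (edges n) s t)"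
  proof -
    have "(\<Sum>\<sigma>\<in>Col ?N m. \<Sum>s\<in>{0..<m}. \<Sum>t\<in>{0..<m}.
          if \<sigma> 0 = s then (if \<sigma> 1 = t then W y (edges n) \<sigma> else 0) else 0)
      = (\<Sum>s\<in>{0..<m}. \<Sum>\<sigma>\<in>Col ?N m. \<Sum>t\<in>{0..<m}.
          if \<sigma> 0 = s then (if \<sigma> 1 = t then W y (edges n) \<sigma> else 0) else 0)"
      by (rule sum.swap)
    also have "\<dots> = (\<Sum>s\<in>{0..<m}. \<Sum>t\<in>{0..<m}. \<Sum>\<sigma>\<in>Col ?N m.
          if \<sigma> 0 = s then (if \<sigma> 1 = t then W y (edges n) \<sigma> else 0) else 0)"
      by (intro sum.cong refl) (rule sum.swap)
    also have "\<dots> = (\<Sum>s\<in>{0..<m}. \<Sum>t\<in>{0..<m}. T y m ?N (edges n) s t)"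
      unfolding T_def by (intro sum.cong refl) simp
    finally show ?thesis .
  qed
  also have "\<dots> = (\<Sum>s\<in>{0..<m}. \<Sum>t\<in>{0..<m}. snd (uv y m n) + (if s = t then fst (uv y m n) - snd (uv y m n) else 0))"
    by (intro sum.cong refl) (simp add: T_DHL[OF m])
  also have "\<dots> = of_nat m * (fst (uv y m n) + (of_nat m - 1) * snd (uv y m n))"
    by (simp add: sum.distrib algebra_simps)
  finally show ?thesis .
qed



lemma Rlift_pair: "Rlift (P, Q) = ((P^2 + (qv - 1) * Q^2)^2, Q^2 * (2 * P + (qv - 2) * Q)^2)"
  by (simp add: Rlift_def)

lemma ev_qv: "poly (poly qv [:y:]) z = z" and ev_yv: "poly (poly yv [:y:]) z = y"
  by (simp_all add: qv_def yv_def)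

lemma Rlift_eval:
  "poly (poly (fst ((Rlift ^^ n) (yv, 1))) [:y:]) (of_nat m) = fst (uv y m n) \<and>
   poly (poly (snd ((Rlift ^^ n) (yv, 1))) [:y:]) (of_nat m) = snd (uv y m n)"
proof (induct n)
  case 0 then show ?case by (simp add: ev_yv)
next
  case (Suc n)
  obtain P Q where PQ: "(Rlift ^^ n) (yv, 1) = (P, Q)" by fastforce
  show ?case using Suc PQ by (simp add: Rlift_pair ev_qv Let_def)
qed

lemma hom_S0: "hom_subst S0poly P Q = [:[:0, -1, 1:]:] * Q + [:[:0, 1:]:] * P"
  by (simp add: hom_subst_def S0_explicit atMost_Suc)

lemma ev_Z: "poly (poly (Zpoly n) [:y:]) z =
  (\<Sum>A\<in>Pow {0..<length (edges n)}. z ^ ncomp (nverts n) (edges n) A * (y - 1) ^ card A)"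
  by (simp add: Zpoly_def poly_sum ev_qv ev_yv)

lemma infinite_nat_image: "infinite ((of_nat :: nat \<Rightarrow> complex) ` {2..})"
proof
  assume "finite ((of_nat :: nat \<Rightarrow> complex) ` {2..})"
  then have "finite {2::nat..}" using finite_imageD inj_of_nat by (metis inj_on_subset subset_UNIV)
  then show False using infinite_Ici by blast
qed

lemma pp_zero:
  fixes D :: "complex poly poly"
  assumes h: "\<And>y m. m \<ge> 2 \<Longrightarrow> poly (poly D [:y:]) (of_nat m) = 0"
  shows "D = 0"
proof -
  have z: "poly D [:y:] = 0" for y
  proof (rule ccontr)
    assume nz: "poly D [:y:] \<noteq> 0"
    have "of_nat ` {2..} \<subseteq> {x. poly (poly D [:y:]) x = 0}" using h by auto
    then have "finite ((of_nat :: nat \<Rightarrow> complex) ` {2..})"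
      using poly_roots_finite[OF nz] finite_subset by blast
    then show False using infinite_nat_image by blast
  qed
  show ?thesis
  proof (rule ccontr)
    assume nz: "D \<noteq> 0"
    have "range (\<lambda>y. [:y:]) \<subseteq> {x. poly D x = 0}" using z by auto
    then have "finite (range (\<lambda>y::complex. [:y:]))"
      using poly_roots_finite[OF nz] finite_subset by blast
    moreover have "inj (\<lambda>y::complex. [:y:])" by (rule injI) simp
    ultimately have "finite (UNIV :: complex set)" using finite_imageD by blast
    then show False using infinite_UNIV_char_0 by blast
  qed
qed

lemma Z_eq: "Zpoly n = hom_subst S0poly (fst ((Rlift ^^ n) (yv, 1))) (snd ((Rlift ^^ n) (yv, 1)))"
proof -
  have "Zpoly n - hom_subst S0poly (fst ((Rlift ^^ n) (yv, 1))) (snd ((Rlift ^^ n) (yv, 1))) = 0"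
  proof (rule pp_zero)
    fix y :: complex and m :: nat assume m: "m \<ge> 2"
    have rng: "\<forall>(u, v)\<in>set (edges n). u < nverts n \<and> v < nverts n" using edges_in by blast
    have "poly (poly (Zpoly n) [:y:]) (of_nat m) = of_nat m * (fst (uv y m n) + (of_nat m - 1) * snd (uv y m n))"
      unfolding ev_Z colour_sum_FK[OF rng, symmetric] Z_colour[OF m] ..
    moreover have "poly (poly (hom_subst S0poly (fst ((Rlift ^^ n) (yv, 1))) (snd ((Rlift ^^ n) (yv, 1)))) [:y:]) (of_nat m)
        = of_nat m * (fst (uv y m n) + (of_nat m - 1) * snd (uv y m n))"
      unfolding hom_S0 using Rlift_eval[of n y m] by (simp add: algebra_simps power2_eq_square)
    ultimately show "poly (poly (Zpoly n - hom_subst S0poly (fst ((Rlift ^^ n) (yv, 1))) (snd ((Rlift ^^ n) (yv, 1)))) [:y:]) (of_nat m) = 0"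
      by simp
  qed
  then show ?thesis by simp
qed

theorem proposition5p5:
  fixes n :: nat
  shows "zero_divisor (Zpoly n) = pullback_div n S0poly"
proof -
  obtain P Q where PQ: "(Rlift ^^ n) (yv, 1) = (P, Q)" by fastforce
  show ?thesis unfolding pullback_div_def PQ using Z_eq[of n] PQ by simp
qed


end
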